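(* Let $\Phi=(A;\{E_i\}_{i=0}^d;A^*;\{E^*_i\}_{i=0}^d)$ be a tridiagonal system on $V$ with $d\ge1$, such that $(A,A^* )$ satisfies the $q$-Serre relations, with $E_iV$ the eigenspace of $A$ for $\theta_i=q^{2i-d}$ and $E^*_iV$ the eigenspace of $A^*$ for $\theta^*_i=q^{d-2i}$. Let $\{U_i\}_{i=0}^d$ be its split decomposition, $K:V\to V$ the linear map acting on $U_i$ as $q^{d-2i}I$, $t$ a scalar, $B=A$ and $B^*=tA^*+(1-t)K$. Then for $0\le i\le d$, on $U_i$ we have $$(B^*-\theta^*_1I)\cdots(B^*-\theta^*_iI)=t^i(A^*-\theta^*_1I)\cdots(A^*-\theta^*_iI),$$ and moreover $(B^*-\theta^*_1I)\cdots(B^*-\theta^*_iI)U_i\subseteq U_0$.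
   Context: $\mathcal K$ is an algebraically closed field; $V$ is a nonzero finite-dimensional vector space over $\mathcal K$; $q\in\mathcal K$ is nonzero and not a root of unity; $[3]_q=q^2+1+q^{-2}$. The $q$-Serre relations for $(X,Y)$: $X^3Y-[3]_qX^2YX+[3]_qXYX^2-YX^3=0$ and $Y^3X-[3]_qY^2XY+[3]_qYXY^2-XY^3=0$. Primitive idempotent of a diagonalizable $X$ for eigenvalue $\lambda_i$: $\prod_{j\ne i}\frac{X-\lambda_jI}{\lambda_i-\lambda_j}$. A tridiagonal system on $V$ is a sequence $(A;\{E_i\}_{i=0}^d;A^*;\{E^*_i\}_{i=0}^d)$ with $A,A^*$ diagonalizable, $\{E_i\}$, $\{E^*_i\}$ orderings of their primitive idempotents, $E_iA^*E_j=0$ and $E^*_iAE^*_j=0$ when $|i-j|>1$, and no subspaces other than $0,V$ invariant under both $A$ and $A^*$. Split decomposition: $U_i=(E^*_0V+\cdots+E^*_iV)\cap(E_iV+\cdots+E_dV)$; known: $V=U_0\oplus\cdots\oplus U_d$, $(A-\theta_iI)U_i\subseteq U_{i+1}$, $(A^*-\theta^*_iI)U_i\subseteq U_{i-1}$ ($U_{-1}=U_{d+1}=0$). *)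

theory Defs
  imports "Jordan_Normal_Form.Jordan_Normal_Form"
begin

text \<open>The vector space V is modelled as the column space K^n (n > 0), linear maps on V
  as n x n matrices over the field K.\<close>

definition diagonalizable_mat :: "'a::field mat \<Rightarrow> bool" where
  "diagonalizable_mat M \<longleftrightarrow> (\<exists>D. similar_mat M D \<and> diagonal_mat D)"

definition is_subspace :: "nat \<Rightarrow> 'a::field vec set \<Rightarrow> bool" where
  "is_subspace n W \<longleftrightarrow> W \<subseteq> carrier_vec n \<and> 0\<^sub>v n \<in> W \<and>
     (\<forall>u\<in>W. \<forall>v\<in>W. u + v \<in> W) \<and> (\<forall>c. \<forall>u\<in>W. c \<cdot>\<^sub>v u \<in> W)"

definition invariant_under :: "'a::field mat \<Rightarrow> 'a vec set \<Rightarrow> bool" where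
  "invariant_under M W \<longleftrightarrow> (\<forall>w\<in>W. M *\<^sub>v w \<in> W)"

definition img :: "nat \<Rightarrow> 'a::field mat \<Rightarrow> 'a vec set" where
  "img n M = {M *\<^sub>v v | v. v \<in> carrier_vec n}"

definition subspace_sum :: "nat \<Rightarrow> (nat \<Rightarrow> 'a::field vec set) \<Rightarrow> nat set \<Rightarrow> 'a vec set" where
  "subspace_sum n S I = {finsum_vec TYPE('a) n f I | f. \<forall>j\<in>I. f j \<in> S j}"

definition prim_idem :: "nat \<Rightarrow> 'a::field mat \<Rightarrow> (nat \<Rightarrow> 'a) \<Rightarrow> nat \<Rightarrow> nat \<Rightarrow> 'a mat" where
  "prim_idem n M th d i =
     foldr (\<lambda>j P. ((1 / (th i - th j)) \<cdot>\<^sub>m (M - th j \<cdot>\<^sub>m 1\<^sub>m n)) * P)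
       (filter (\<lambda>j. j \<noteq> i) [0..<Suc d]) (1\<^sub>m n)"

text \<open>A tridiagonal system (A; {E_i}; A*; {E*_i}) on K^n, where E_i is the primitive
  idempotent of A for eigenvalue th i and E*_i that of A* for eigenvalue ths i;
  the orderings of the primitive idempotents are encoded by the orderings th, ths of
  the eigenvalues.\<close>
definition tridiagonal_system ::
  "nat \<Rightarrow> nat \<Rightarrow> 'a::field mat \<Rightarrow> (nat \<Rightarrow> 'a) \<Rightarrow> 'a mat \<Rightarrow> (nat \<Rightarrow> 'a) \<Rightarrow> bool" where
  "tridiagonal_system n d A th As ths \<longleftrightarrow>
     A \<in> carrier_mat n n \<and> As \<in> carrier_mat n n \<and>
     diagonalizable_mat A \<and> diagonalizable_mat As \<and>
     inj_on th {0..d} \<and> inj_on ths {0..d} \<and>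
     {k. eigenvalue A k} = th ` {0..d} \<and> {k. eigenvalue As k} = ths ` {0..d} \<and>
     (\<forall>i\<le>d. \<forall>j\<le>d. (i > j + 1 \<or> j > i + 1) \<longrightarrow>
        prim_idem n A th d i * As * prim_idem n A th d j = 0\<^sub>m n n \<and>
        prim_idem n As ths d i * A * prim_idem n As ths d j = 0\<^sub>m n n) \<and>
     (\<forall>W. is_subspace n W \<and> invariant_under A W \<and> invariant_under As W \<longrightarrow>
        W = {0\<^sub>v n} \<or> W = carrier_vec n)"

definition split_comp ::
  "nat \<Rightarrow> nat \<Rightarrow> 'a::field mat \<Rightarrow> (nat \<Rightarrow> 'a) \<Rightarrow> 'a mat \<Rightarrow> (nat \<Rightarrow> 'a) \<Rightarrow> nat \<Rightarrow> 'a vec set" where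
  "split_comp n d A th As ths i =
     subspace_sum n (\<lambda>j. img n (prim_idem n As ths d j)) {0..i} \<inter>
     subspace_sum n (\<lambda>j. img n (prim_idem n A th d j)) {i..d}"

definition q_serre :: "nat \<Rightarrow> 'a::field \<Rightarrow> 'a mat \<Rightarrow> 'a mat \<Rightarrow> bool" where
  "q_serre n q X Y \<longleftrightarrow>
     (let c = q^2 + 1 + inverse (q^2) in
      X*X*X*Y - c \<cdot>\<^sub>m (X*X*Y*X) + c \<cdot>\<^sub>m (X*Y*X*X) - Y*X*X*X = 0\<^sub>m n n \<and>
      Y*Y*Y*X - c \<cdot>\<^sub>m (Y*Y*X*Y) + c \<cdot>\<^sub>m (Y*X*Y*Y) - X*Y*Y*Y = 0\<^sub>m n n)"

fun shifted_prod :: "nat \<Rightarrow> 'a::field mat \<Rightarrow> (nat \<Rightarrow> 'a) \<Rightarrow> nat \<Rightarrow> 'a mat" where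
  "shifted_prod n M ths 0 = 1\<^sub>m n"
| "shifted_prod n M ths (Suc i) = shifted_prod n M ths i * (M - ths (Suc i) \<cdot>\<^sub>m 1\<^sub>m n)"

end

theory Submission
  imports Defs
begin

definition dg :: "nat \<Rightarrow> (nat \<Rightarrow> 'a::field) \<Rightarrow> 'a mat" where
  "dg n f = mat n n (\<lambda>(a,b). if a = b then f a else 0)"

lemma dg_carrier[simp]: "dg n f \<in> carrier_mat n n"
  by (simp add: dg_def)

lemma dg_mult_vec_carrier[simp]: "dg n f *\<^sub>v y \<in> carrier_vec n"
  unfolding carrier_vec_def by (simp add: dg_def)

lemma dg_mult: "dg n f * dg n g = dg n (\<lambda>a. f a * g a)"
proof (rule eq_matI)
  fix i j assume ij: "i < dim_row (dg n (\<lambda>a. f a * g a))" "j < dim_col (dg n (\<lambda>a. f a * g a))"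
  hence "i < n" "j < n" by (auto simp: dg_def)
  have "(dg n f * dg n g) $$ (i, j) = (\<Sum>k\<in>{0..<n}. (if i = k then f i else 0) * (if k = j then g k else 0))"
    using \<open>i < n\<close> \<open>j < n\<close> by (simp add: dg_def scalar_prod_def)
  also have "\<dots> = (\<Sum>k\<in>{0..<n}. if k = i then (if i = j then f i * g i else 0) else 0)"
    by (rule sum.cong) auto
  also have "\<dots> = dg n (\<lambda>a. f a * g a) $$ (i, j)"
    using \<open>i < n\<close> \<open>j < n\<close> by (simp add: dg_def)
  finally show "(dg n f * dg n g) $$ (i, j) = dg n (\<lambda>a. f a * g a) $$ (i, j)" .
qed (auto simp: dg_def)

lemma dg_one: "1\<^sub>m n = dg n (\<lambda>_. 1)"
  by (rule eq_matI, auto simp: dg_def)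

lemma dg_shift: assumes "D \<in> carrier_mat n n" "diagonal_mat D"
  shows "c \<cdot>\<^sub>m (D - s \<cdot>\<^sub>m 1\<^sub>m n) = dg n (\<lambda>a. c * (D $$ (a,a) - s))"
  by (rule eq_matI, insert assms, auto simp: dg_def diagonal_mat_def)

lemma foldr_dg: fixes D :: "'a::field mat" assumes "D \<in> carrier_mat n n" "diagonal_mat D"
  shows "foldr (\<lambda>j X. (c j \<cdot>\<^sub>m (D - th j \<cdot>\<^sub>m 1\<^sub>m n)) * X) xs (1\<^sub>m n)
     = dg n (\<lambda>a. prod_list (map (\<lambda>j. c j * (D $$ (a,a) - th j)) xs))"
proof (induction xs)
  case Nil
  then show ?case by (simp add: dg_one)
next
  case (Cons x xs)
  then show ?case by (simp add: dg_shift[OF assms] dg_mult)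
qed

lemma foldr_sim: fixes M D P Q :: "'a::field mat" assumes "{M, D, P, Q} \<subseteq> carrier_mat n n" "P * Q = 1\<^sub>m n" "Q * P = 1\<^sub>m n" "M = P * D * Q"
  shows "foldr (\<lambda>j X. (c j \<cdot>\<^sub>m (M - th j \<cdot>\<^sub>m 1\<^sub>m n)) * X) xs (1\<^sub>m n)
     = P * foldr (\<lambda>j X. (c j \<cdot>\<^sub>m (D - th j \<cdot>\<^sub>m 1\<^sub>m n)) * X) xs (1\<^sub>m n) * Q"
proof -
  have car: "M \<in> carrier_mat n n" "D \<in> carrier_mat n n" "P \<in> carrier_mat n n" "Q \<in> carrier_mat n n" using assms by auto
  show ?thesis
  proof (induction xs)
    case Nil
    have "P * 1\<^sub>m n = P" using car(3) by (rule right_mult_one_mat)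
    then show ?case using assms(2) by simp
  next
    case (Cons x xs)
    define F where "F = foldr (\<lambda>j X. (c j \<cdot>\<^sub>m (D - th j \<cdot>\<^sub>m 1\<^sub>m n)) * X) xs (1\<^sub>m n)"
    have Fc: "F \<in> carrier_mat n n" unfolding F_def by (induction xs, insert car, auto)
    define G where "G = c x \<cdot>\<^sub>m (D - th x \<cdot>\<^sub>m 1\<^sub>m n)"
    have Gc: "G \<in> carrier_mat n n" unfolding G_def using car by auto
    have "c x \<cdot>\<^sub>m (M - th x \<cdot>\<^sub>m 1\<^sub>m n) = P * G * Q"
    proof -
      have "P * G = c x \<cdot>\<^sub>m (P * (D - th x \<cdot>\<^sub>m 1\<^sub>m n))"
        unfolding G_def by (rule mult_smult_distrib, insert car, auto)
      also have "P * (D - th x \<cdot>\<^sub>m 1\<^sub>m n) = P * D - th x \<cdot>\<^sub>m P"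
        proof -
        have "P * (D - th x \<cdot>\<^sub>m 1\<^sub>m n) = P * D - P * (th x \<cdot>\<^sub>m 1\<^sub>m n)"
          by (rule mult_minus_distrib_mat, insert car, auto)
        also have "P * (th x \<cdot>\<^sub>m 1\<^sub>m n) = th x \<cdot>\<^sub>m (P * 1\<^sub>m n)"
          by (rule mult_smult_distrib, insert car, auto)
        finally show ?thesis using car by simp
      qed
      finally have "P * G * Q = (c x \<cdot>\<^sub>m (P * D - th x \<cdot>\<^sub>m P)) * Q" by simp
      also have "\<dots> = c x \<cdot>\<^sub>m ((P * D - th x \<cdot>\<^sub>m P) * Q)"
        by (rule mult_smult_assoc_mat, insert car, auto)
      also have "(P * D - th x \<cdot>\<^sub>m P) * Q = P * D * Q - th x \<cdot>\<^sub>m (P * Q)"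
        proof -
        have "(P * D - th x \<cdot>\<^sub>m P) * Q = P * D * Q - (th x \<cdot>\<^sub>m P) * Q"
          by (rule minus_mult_distrib_mat, insert car, auto)
        also have "(th x \<cdot>\<^sub>m P) * Q = th x \<cdot>\<^sub>m (P * Q)"
          by (rule mult_smult_assoc_mat, insert car, auto)
        finally show ?thesis .
      qed
      finally have "P * G * Q = c x \<cdot>\<^sub>m (P * D * Q - th x \<cdot>\<^sub>m (P * Q))" .
      thus ?thesis using assms by simp
    qed
    hence "c x \<cdot>\<^sub>m (M - th x \<cdot>\<^sub>m 1\<^sub>m n) * (P * F * Q) = P * G * (Q * P) * F * Q"
      using car Fc Gc by (simp add: assoc_mult_mat[of _ n n _ n _ n])
    also have "\<dots> = P * (G * F) * Q" using assms car Fc Gc by (simp add: assoc_mult_mat[of _ n n _ n _ n])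
    finally show ?case using Cons unfolding F_def G_def by simp
  qed
qed

lemma dg_cong: "(\<And>a. a < n \<Longrightarrow> f a = g a) \<Longrightarrow> dg n f = dg n g"
  by (rule eq_matI, auto simp: dg_def)

lemma dg_zero: "dg n (\<lambda>_. 0) = 0\<^sub>m n n"
  by (rule eq_matI, auto simp: dg_def)

lemma dg_smult: "c \<cdot>\<^sub>m dg n f = dg n (\<lambda>a. c * f a)"
  by (rule eq_matI, auto simp: dg_def)

lemma diag_dg: "D \<in> carrier_mat n n \<Longrightarrow> diagonal_mat D \<Longrightarrow> D = dg n (\<lambda>a. D $$ (a,a))"
  by (rule eq_matI, auto simp: dg_def diagonal_mat_def)

lemma mult_zero_vec[simp]: "M \<in> carrier_mat n n \<Longrightarrow> M *\<^sub>v 0\<^sub>v n = 0\<^sub>v n"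
  by (rule eq_vecI, auto)

lemma smult_zero_vec'[simp]: "c \<cdot>\<^sub>v 0\<^sub>v n = (0\<^sub>v n :: 'a::field vec)"
  by (rule eq_vecI, auto)

lemma zero_mat_mult_vec[simp]: "u \<in> carrier_vec n \<Longrightarrow> 0\<^sub>m n n *\<^sub>v u = (0\<^sub>v n :: 'a::field vec)"
  by (rule eq_vecI, auto)

lemma finsum_mult_vec: fixes M :: "'a::field mat"
  assumes "M \<in> carrier_mat n n" "finite I" "\<And>j. j \<in> I \<Longrightarrow> f j \<in> carrier_vec n"
  shows "M *\<^sub>v finsum_vec TYPE('a) n f I = finsum_vec TYPE('a) n (\<lambda>j. M *\<^sub>v f j) I"
  using assms(2,3)
proof (induction I rule: finite_induct)
  case empty
  then show ?case using assms(1) by (simp add: finsum_vec_empty)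
next
  case (insert x F)
  have fc: "f \<in> F \<rightarrow> carrier_vec n" "f x \<in> carrier_vec n" using insert by auto
  have gc: "(\<lambda>j. M *\<^sub>v f j) \<in> F \<rightarrow> carrier_vec n" "M *\<^sub>v f x \<in> carrier_vec n" using insert assms(1) by auto
  show ?case
    unfolding finsum_vec_insert[OF insert(1,2) fc] finsum_vec_insert[OF insert(1,2) gc]
    using insert assms(1) fc
    by (simp add: mult_add_distrib_mat_vec[OF assms(1)] finsum_vec_closed)
qed

lemma finsum_smult_vec: fixes c :: "'a::field"
  assumes "finite I" "\<And>j. j \<in> I \<Longrightarrow> f j \<in> carrier_vec n"
  shows "c \<cdot>\<^sub>v finsum_vec TYPE('a) n f I = finsum_vec TYPE('a) n (\<lambda>j. c \<cdot>\<^sub>v f j) I"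
  using assms
proof (induction I rule: finite_induct)
  case empty
  then show ?case by (simp add: finsum_vec_empty)
next
  case (insert x F)
  have fc: "f \<in> F \<rightarrow> carrier_vec n" "f x \<in> carrier_vec n" using insert by auto
  have gc: "(\<lambda>j. c \<cdot>\<^sub>v f j) \<in> F \<rightarrow> carrier_vec n" "c \<cdot>\<^sub>v f x \<in> carrier_vec n" using insert by auto
  show ?case
    unfolding finsum_vec_insert[OF insert(1,2) fc] finsum_vec_insert[OF insert(1,2) gc]
    using insert fc
    by (simp add: smult_add_distrib_vec[OF fc(2) finsum_vec_closed[OF fc(1)]])
qed

lemma finsum_vec_cong: 
  assumes "\<And>j. j \<in> I \<Longrightarrow> f j = g j" "\<And>j. j \<in> I \<Longrightarrow> g j \<in> carrier_vec n"
  shows "finsum_vec TYPE('a::comm_monoid_add) n f I = finsum_vec TYPE('a) n g I"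
  unfolding finsum_vec_def
  by (rule comm_monoid.finprod_cong'[OF comm_monoid_vec], auto simp: monoid_vec_simps assms)

lemma dg_mult_vec: "y \<in> carrier_vec n \<Longrightarrow> i < n \<Longrightarrow> (dg n f *\<^sub>v y) $ i = f i * y $ i"
proof -
  assume y: "y \<in> carrier_vec n" and i: "i < n"
  have "(dg n f *\<^sub>v y) $ i = (\<Sum>k\<in>{0..<n}. (if i = k then f i else 0) * y $ k)"
    using y i by (simp add: dg_def scalar_prod_def)
  also have "\<dots> = (\<Sum>k\<in>{0..<n}. if k = i then f i * y $ i else 0)"
    by (rule sum.cong) auto
  finally show ?thesis using i by simp
qed

lemma prim_idem_diag: fixes M D P Q :: "'a::field mat"
  assumes "similar_mat_wit M D P Q" "M \<in> carrier_mat n n" "diagonal_mat D"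
    "inj_on th {0..d}" "\<forall>a<n. \<exists>m\<le>d. D $$ (a,a) = th m" "j \<le> d"
  shows "prim_idem n M th d j = P * dg n (\<lambda>a. if D $$ (a,a) = th j then 1 else 0) * Q"
proof -
  have w: "{M, D, P, Q} \<subseteq> carrier_mat n n" "P * Q = 1\<^sub>m n" "Q * P = 1\<^sub>m n" "M = P * D * Q"
    using assms(1,2) unfolding similar_mat_wit_def Let_def by auto
  have Dc: "D \<in> carrier_mat n n" using w by auto
  have "prim_idem n M th d j = P * dg n (\<lambda>a. prod_list (map (\<lambda>k. 1 / (th j - th k) * (D $$ (a,a) - th k)) (filter (\<lambda>k. k \<noteq> j) [0..<Suc d]))) * Q"
    unfolding prim_idem_def foldr_sim[OF w] foldr_dg[OF Dc assms(3)] ..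
  also have "dg n (\<lambda>a. prod_list (map (\<lambda>k. 1 / (th j - th k) * (D $$ (a,a) - th k)) (filter (\<lambda>k. k \<noteq> j) [0..<Suc d])))
    = dg n (\<lambda>a. if D $$ (a,a) = th j then 1 else 0)"
  proof (rule dg_cong)
    fix a assume a: "a < n"
    then obtain m where m: "m \<le> d" "D $$ (a,a) = th m" using assms(5) by auto
    have dist: "distinct (filter (\<lambda>k. k \<noteq> j) [0..<Suc d])" by simp
    have set: "set (filter (\<lambda>k. k \<noteq> j) [0..<Suc d]) = {0..d} - {j}" by auto
    have "prod_list (map (\<lambda>k. 1 / (th j - th k) * (D $$ (a,a) - th k)) (filter (\<lambda>k. k \<noteq> j) [0..<Suc d]))
       = prod (\<lambda>k. 1 / (th j - th k) * (D $$ (a,a) - th k)) ({0..d} - {j})"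
      unfolding set[symmetric] by (rule prod.distinct_set_conv_list[OF dist, symmetric])
    also have "\<dots> = (if D $$ (a,a) = th j then 1 else 0)"
    proof (cases "m = j")
      case True
      have "prod (\<lambda>k. 1 / (th j - th k) * (D $$ (a,a) - th k)) ({0..d} - {j}) = prod (\<lambda>k. 1) ({0..d} - {j})"
      proof (rule prod.cong)
        fix k assume k: "k \<in> {0..d} - {j}"
        hence "th j \<noteq> th k" using assms(4,6) by (auto dest: inj_onD)
        thus "1 / (th j - th k) * (D $$ (a,a) - th k) = 1" using m True by simp
      qed simp
      thus ?thesis using m True by simp
    next
      case False
      have "th m \<noteq> th j" using False m assms(4,6) by (auto dest: inj_onD)
      moreover have "prod (\<lambda>k. 1 / (th j - th k) * (D $$ (a,a) - th k)) ({0..d} - {j}) = 0"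
        using False m by (intro prod_zero) (auto intro!: bexI[of _ m])
      ultimately show ?thesis using m by simp
    qed
    finally show "prod_list (map (\<lambda>k. 1 / (th j - th k) * (D $$ (a,a) - th k)) (filter (\<lambda>k. k \<noteq> j) [0..<Suc d]))
       = (if D $$ (a,a) = th j then 1 else 0)" .
  qed
  finally show ?thesis .
qed

lemma diag_eig: fixes M D P Q :: "'a::field mat"
  assumes "similar_mat_wit M D P Q" "M \<in> carrier_mat n n" "diagonal_mat D" "a < n"
  shows "eigenvalue M (D $$ (a,a))"
proof -
  have w: "M \<in> carrier_mat n n" "D \<in> carrier_mat n n" "P \<in> carrier_mat n n" "Q \<in> carrier_mat n n"
     "P * Q = 1\<^sub>m n" "Q * P = 1\<^sub>m n" "M = P * D * Q"
    using assms(1,2) unfolding similar_mat_wit_def Let_def by auto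
  define e where "e = (unit_vec n a :: 'a vec)"
  have ec: "e \<in> carrier_vec n" unfolding e_def by simp
  define v where "v = P *\<^sub>v e"
  have vc: "v \<in> carrier_vec n" unfolding v_def using w ec by simp
  have De: "D *\<^sub>v e = D $$ (a,a) \<cdot>\<^sub>v e"
    by (rule eq_vecI, insert w assms(3,4), auto simp: e_def diagonal_mat_def)
  have QP: "Q *\<^sub>v v = e" unfolding v_def using w ec
    by (metis assoc_mult_mat_vec one_mult_mat_vec)
  have DQ: "D * Q \<in> carrier_mat n n" using w by simp
  have "M *\<^sub>v v = P *\<^sub>v (D *\<^sub>v (Q *\<^sub>v v))"
    unfolding w(7) assoc_mult_mat_vec[OF mult_carrier_mat[OF w(3) w(2)] w(4) vc]
      assoc_mult_mat_vec[OF w(3) w(2) mult_mat_vec_carrier[OF w(4) vc]] ..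
  also have "\<dots> = P *\<^sub>v (D $$ (a,a) \<cdot>\<^sub>v e)" using QP De by simp
  also have "\<dots> = D $$ (a,a) \<cdot>\<^sub>v v" unfolding v_def by (rule mult_mat_vec[OF w(3) ec])
  finally have Mv: "M *\<^sub>v v = D $$ (a,a) \<cdot>\<^sub>v v" .
  have "v \<noteq> 0\<^sub>v n"
  proof
    assume "v = 0\<^sub>v n"
    hence "Q *\<^sub>v v = 0\<^sub>v n" using w by simp
    thus False using QP assms(4) unfolding e_def by simp
  qed
  thus ?thesis unfolding eigenvalue_def eigenvector_def using vc Mv w by auto
qed

lemma idem_facts: fixes M :: "'a::field mat"
  assumes "M \<in> carrier_mat n n" "diagonalizable_mat M" "inj_on th {0..d}"
    "{k. eigenvalue M k} = th ` {0..d}"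
  shows "(\<forall>j\<le>d. prim_idem n M th d j \<in> carrier_mat n n) \<and>
    (\<forall>j\<le>d. \<forall>k\<le>d. prim_idem n M th d k * prim_idem n M th d j = (if k = j then prim_idem n M th d j else 0\<^sub>m n n)) \<and>
    (\<forall>j\<le>d. M * prim_idem n M th d j = th j \<cdot>\<^sub>m prim_idem n M th d j) \<and>
    (\<forall>j\<le>d. prim_idem n M th d j * M = th j \<cdot>\<^sub>m prim_idem n M th d j) \<and>
    (\<forall>x\<in>carrier_vec n. finsum_vec TYPE('a) n (\<lambda>j. prim_idem n M th d j *\<^sub>v x) {0..d} = x)"
proof -
  obtain D where D: "similar_mat M D" "diagonal_mat D" using assms(2) unfolding diagonalizable_mat_def by auto
  then obtain P Q where wit: "similar_mat_wit M D P Q" unfolding similar_mat_def by auto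
  have w: "M \<in> carrier_mat n n" "D \<in> carrier_mat n n" "P \<in> carrier_mat n n" "Q \<in> carrier_mat n n"
     "P * Q = 1\<^sub>m n" "Q * P = 1\<^sub>m n" "M = P * D * Q"
    using wit assms(1) unfolding similar_mat_wit_def Let_def by auto
  have ev: "\<forall>a<n. \<exists>m\<le>d. D $$ (a,a) = th m"
  proof (intro allI impI)
    fix a assume "a < n"
    hence "D $$ (a,a) \<in> {k. eigenvalue M k}" using diag_eig[OF wit assms(1) D(2)] by auto
    thus "\<exists>m\<le>d. D $$ (a,a) = th m" using assms(4) by auto
  qed
  define dl where "dl j = (\<lambda>a. if D $$ (a,a) = th j then (1::'a) else 0)" for j
  have E: "prim_idem n M th d j = P * dg n (dl j) * Q" if "j \<le> d" for j
    using prim_idem_diag[OF wit assms(1) D(2) assms(3) ev that] unfolding dl_def by simp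
  have Ec: "prim_idem n M th d j \<in> carrier_mat n n" if "j \<le> d" for j
    unfolding E[OF that] using w by (intro mult_carrier_mat, auto)
  have sand: "(P * X * Q) * (P * Y * Q) = P * (X * Y) * Q" if "X \<in> carrier_mat n n" "Y \<in> carrier_mat n n" for X Y
  proof -
    have qp: "Q * (P * Z) = Z" if "Z \<in> carrier_mat n n" for Z
    proof -
      have "Q * (P * Z) = (Q * P) * Z" by (rule assoc_mult_mat[symmetric, OF w(4) w(3) that])
      thus ?thesis using w(6) left_mult_one_mat[OF that] by simp
    qed
    have "Y * Q \<in> carrier_mat n n" using w that by simp
    thus ?thesis using w that qp by (simp add: assoc_mult_mat[of _ n n _ n _ n])
  qed
  have Ddg: "D = dg n (\<lambda>a. D $$ (a,a))" using diag_dg[OF w(2) D(2)] .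
  have M': "M = P * D * Q" by (rule w(7))
  have "(\<forall>j\<le>d. \<forall>k\<le>d. prim_idem n M th d k * prim_idem n M th d j = (if k = j then prim_idem n M th d j else 0\<^sub>m n n))"
  proof (intro allI impI)
    fix j k assume jk: "j \<le> d" "k \<le> d"
    have "prim_idem n M th d k * prim_idem n M th d j = P * dg n (\<lambda>a. dl k a * dl j a) * Q"
      unfolding E[OF jk(1)] E[OF jk(2)] sand[OF dg_carrier dg_carrier] dg_mult ..
    also have "dg n (\<lambda>a. dl k a * dl j a) = (if k = j then dg n (dl j) else dg n (\<lambda>_. 0))"
      using jk assms(3) by (auto simp: dl_def inj_on_def intro!: dg_cong)
    finally show "prim_idem n M th d k * prim_idem n M th d j = (if k = j then prim_idem n M th d j else 0\<^sub>m n n)"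
      using E[OF jk(1)] w by (auto simp: dg_zero)
  qed
  moreover have "\<forall>j\<le>d. M * prim_idem n M th d j = th j \<cdot>\<^sub>m prim_idem n M th d j"
  proof (intro allI impI)
    fix j assume j: "j \<le> d"
    have "M * prim_idem n M th d j = (P * D * Q) * prim_idem n M th d j" using M' by simp
    also have "\<dots> = P * (D * dg n (dl j)) * Q"
      unfolding E[OF j] by (rule sand, insert w, auto)
    also have "D * dg n (dl j) = th j \<cdot>\<^sub>m dg n (dl j)"
      by (subst Ddg, unfold dg_mult dg_smult, rule dg_cong, auto simp: dl_def)
    also have "P * (th j \<cdot>\<^sub>m dg n (dl j)) * Q = th j \<cdot>\<^sub>m (P * dg n (dl j) * Q)"
      using w by (simp add: mult_smult_distrib[of _ n n _ n] mult_smult_assoc_mat[of _ n n _ n])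
    finally show "M * prim_idem n M th d j = th j \<cdot>\<^sub>m prim_idem n M th d j" using E[OF j] by simp
  qed
  moreover have "\<forall>j\<le>d. prim_idem n M th d j * M = th j \<cdot>\<^sub>m prim_idem n M th d j"
  proof (intro allI impI)
    fix j assume j: "j \<le> d"
    have "prim_idem n M th d j * M = prim_idem n M th d j * (P * D * Q)" using M' by simp
    also have "\<dots> = P * (dg n (dl j) * D) * Q"
      unfolding E[OF j] by (rule sand, insert w, auto)
    also have "dg n (dl j) * D = th j \<cdot>\<^sub>m dg n (dl j)"
      by (subst Ddg, unfold dg_mult dg_smult, rule dg_cong, auto simp: dl_def)
    also have "P * (th j \<cdot>\<^sub>m dg n (dl j)) * Q = th j \<cdot>\<^sub>m (P * dg n (dl j) * Q)"
      using w by (simp add: mult_smult_distrib[of _ n n _ n] mult_smult_assoc_mat[of _ n n _ n])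
    finally show "prim_idem n M th d j * M = th j \<cdot>\<^sub>m prim_idem n M th d j" using E[OF j] by simp
  qed
  moreover have "\<forall>x\<in>carrier_vec n. finsum_vec TYPE('a) n (\<lambda>j. prim_idem n M th d j *\<^sub>v x) {0..d} = x"
  proof
    fix x :: "'a vec" assume x: "x \<in> carrier_vec n"
    define y where "y = Q *\<^sub>v x"
    have yc: "y \<in> carrier_vec n" using w x unfolding y_def by simp
    have "finsum_vec TYPE('a) n (\<lambda>j. prim_idem n M th d j *\<^sub>v x) {0..d}
       = finsum_vec TYPE('a) n (\<lambda>j. P *\<^sub>v (dg n (dl j) *\<^sub>v y)) {0..d}"
    proof (rule finsum_vec_cong)
      fix j assume "j \<in> {0..d}"
      hence j: "j \<le> d" by simp
      show "prim_idem n M th d j *\<^sub>v x = P *\<^sub>v (dg n (dl j) *\<^sub>v y)"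
        unfolding E[OF j] y_def
        assoc_mult_mat_vec[OF mult_carrier_mat[OF w(3) dg_carrier] w(4) x]
        assoc_mult_mat_vec[OF w(3) dg_carrier mult_mat_vec_carrier[OF w(4) x]] ..
      show "P *\<^sub>v (dg n (dl j) *\<^sub>v y) \<in> carrier_vec n"
        by (rule mult_mat_vec_carrier[OF w(3) mult_mat_vec_carrier[OF dg_carrier yc]])
    qed
    also have "\<dots> = P *\<^sub>v finsum_vec TYPE('a) n (\<lambda>j. dg n (dl j) *\<^sub>v y) {0..d}"
      by (rule finsum_mult_vec[symmetric, OF w(3)], insert yc, auto intro: mult_mat_vec_carrier[OF dg_carrier])
    also have "finsum_vec TYPE('a) n (\<lambda>j. dg n (dl j) *\<^sub>v y) {0..d} = y"
    proof (rule eq_vecI)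
      fix i assume "i < dim_vec y"
      hence i: "i < n" using yc by simp
      obtain m where m: "m \<le> d" "D $$ (i,i) = th m" using ev i by auto
      have "finsum_vec TYPE('a) n (\<lambda>j. dg n (dl j) *\<^sub>v y) {0..d} $ i = (\<Sum>j\<in>{0..d}. (dg n (dl j) *\<^sub>v y) $ i)"
        by (rule index_finsum_vec, insert i yc, auto)
      also have "\<dots> = (\<Sum>j\<in>{0..d}. if j = m then y $ i else 0)"
      proof (rule sum.cong)
        fix j assume j: "j \<in> {0..d}"
        have "dl j i = (if j = m then 1 else 0)" using m j assms(3) unfolding dl_def inj_on_def by auto
        thus "(dg n (dl j) *\<^sub>v y) $ i = (if j = m then y $ i else 0)" using dg_mult_vec[OF yc i] by simp
      qed simp
      also have "\<dots> = y $ i" using m by simp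
      finally show "finsum_vec TYPE('a) n (\<lambda>j. dg n (dl j) *\<^sub>v y) {0..d} $ i = y $ i" .
    next
      show "dim_vec (finsum_vec TYPE('a) n (\<lambda>j. dg n (dl j) *\<^sub>v y) {0..d}) = dim_vec y"
        using finsum_vec_closed[of "\<lambda>j. dg n (dl j) *\<^sub>v y" "{0..d}" n] yc by auto
    qed
    also have "P *\<^sub>v y = x" unfolding y_def using w x
      by (metis assoc_mult_mat_vec one_mult_mat_vec)
    finally show "finsum_vec TYPE('a) n (\<lambda>j. prim_idem n M th d j *\<^sub>v x) {0..d} = x" .
  qed
  ultimately show ?thesis using Ec by blast
qed

lemma smult_mat_vec: "A \<in> carrier_mat n n \<Longrightarrow> v \<in> carrier_vec n \<Longrightarrow> (k \<cdot>\<^sub>m A) *\<^sub>v v = k \<cdot>\<^sub>v (A *\<^sub>v (v::'a::field vec))"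
  by (rule eq_vecI, auto simp: scalar_prod_def sum_distrib_left mult.assoc)

lemma finsum_vec_zero: "finite I \<Longrightarrow> finsum_vec TYPE('a::comm_monoid_add) n (\<lambda>_. 0\<^sub>v n) I = 0\<^sub>v n"
  by (rule eq_vecI, auto simp: index_finsum_vec finsum_vec_closed)

lemma sub_char: fixes E :: "nat \<Rightarrow> 'a::field mat"
  assumes Ec: "\<forall>j\<le>d. E j \<in> carrier_mat n n"
    and orth: "\<forall>j\<le>d. \<forall>k\<le>d. E k * E j = (if k = j then E j else 0\<^sub>m n n)"
    and res: "\<forall>x\<in>carrier_vec n. finsum_vec TYPE('a) n (\<lambda>j. E j *\<^sub>v x) {0..d} = x"
    and J: "J \<subseteq> {0..d}"
  shows "subspace_sum n (\<lambda>j. img n (E j)) J = {x \<in> carrier_vec n. \<forall>k\<in>{0..d}-J. E k *\<^sub>v x = 0\<^sub>v n}"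
proof -
  have fin: "finite J" using J finite_subset by blast
  show ?thesis
  proof
  show "subspace_sum n (\<lambda>j. img n (E j)) J \<subseteq> {x \<in> carrier_vec n. \<forall>k\<in>{0..d}-J. E k *\<^sub>v x = 0\<^sub>v n}"
  proof
    fix x assume "x \<in> subspace_sum n (\<lambda>j. img n (E j)) J"
    then obtain f where x: "x = finsum_vec TYPE('a) n f J" and f: "\<forall>j\<in>J. f j \<in> img n (E j)"
      unfolding subspace_sum_def by auto
    have fv: "\<forall>j\<in>J. \<exists>v. v \<in> carrier_vec n \<and> f j = E j *\<^sub>v v" using f unfolding img_def by blast
    have fc: "\<And>j. j \<in> J \<Longrightarrow> f j \<in> carrier_vec n" using fv Ec J by fastforce
    have xc: "x \<in> carrier_vec n" unfolding x by (rule finsum_vec_closed, insert fc, auto)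
    have "E k *\<^sub>v x = 0\<^sub>v n" if k: "k \<in> {0..d} - J" for k
    proof -
      have Ekc: "E k \<in> carrier_mat n n" using Ec k by auto
      have "E k *\<^sub>v x = finsum_vec TYPE('a) n (\<lambda>j. E k *\<^sub>v f j) J"
        unfolding x by (rule finsum_mult_vec[OF Ekc fin fc])
      also have "\<dots> = finsum_vec TYPE('a) n (\<lambda>_. 0\<^sub>v n) J"
      proof (rule finsum_vec_cong)
        fix j assume j: "j \<in> J"
        then obtain v where v: "v \<in> carrier_vec n" "f j = E j *\<^sub>v v" using fv by auto
        have jd: "j \<le> d" "k \<le> d" "k \<noteq> j" using j k J by auto
        have Ejc: "E j \<in> carrier_mat n n" using Ec jd by auto
        have "E k *\<^sub>v f j = (E k * E j) *\<^sub>v v" unfolding v(2) by (rule assoc_mult_mat_vec[symmetric, OF Ekc Ejc v(1)])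
        also have "\<dots> = 0\<^sub>v n" using orth jd v(1) by auto
        finally show "E k *\<^sub>v f j = 0\<^sub>v n" .
      qed simp
      also have "\<dots> = 0\<^sub>v n" by (rule finsum_vec_zero[OF fin])
      finally show ?thesis .
    qed
    thus "x \<in> {x \<in> carrier_vec n. \<forall>k\<in>{0..d}-J. E k *\<^sub>v x = 0\<^sub>v n}" using xc by auto
  qed
next
  show "{x \<in> carrier_vec n. \<forall>k\<in>{0..d}-J. E k *\<^sub>v x = 0\<^sub>v n} \<subseteq> subspace_sum n (\<lambda>j. img n (E j)) J"
  proof
    fix x assume "x \<in> {x \<in> carrier_vec n. \<forall>k\<in>{0..d}-J. E k *\<^sub>v x = 0\<^sub>v n}"
    hence xc: "x \<in> carrier_vec n" and z: "\<forall>k\<in>{0..d}-J. E k *\<^sub>v x = 0\<^sub>v n" by auto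
    have fc: "E j *\<^sub>v x \<in> carrier_vec n" if "j \<le> d" for j using Ec that xc by auto
    have fsc: "finsum_vec TYPE('a) n (\<lambda>j. E j *\<^sub>v x) J \<in> carrier_vec n"
      by (rule finsum_vec_closed, insert fc J, auto)
    have "x = finsum_vec TYPE('a) n (\<lambda>j. E j *\<^sub>v x) J"
    proof (rule eq_vecI)
      fix i assume "i < dim_vec (finsum_vec TYPE('a) n (\<lambda>j. E j *\<^sub>v x) J)"
      hence i: "i < n" using fsc by auto
      have "x $ i = finsum_vec TYPE('a) n (\<lambda>j. E j *\<^sub>v x) {0..d} $ i" using res xc by simp
      also have "\<dots> = (\<Sum>j\<in>{0..d}. (E j *\<^sub>v x) $ i)"
        by (rule index_finsum_vec, insert i fc, auto)
      also have "\<dots> = (\<Sum>j\<in>J. (E j *\<^sub>v x) $ i)"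
        by (rule sum.mono_neutral_right, insert J z i, auto)
      also have "\<dots> = finsum_vec TYPE('a) n (\<lambda>j. E j *\<^sub>v x) J $ i"
        by (rule index_finsum_vec[symmetric], insert i fc J fin, auto)
      finally show "x $ i = finsum_vec TYPE('a) n (\<lambda>j. E j *\<^sub>v x) J $ i" .
    next
      show "dim_vec x = dim_vec (finsum_vec TYPE('a) n (\<lambda>j. E j *\<^sub>v x) J)"
        using fsc xc by auto
    qed
    moreover have "\<forall>j\<in>J. E j *\<^sub>v x \<in> img n (E j)" using xc unfolding img_def by auto
    ultimately show "x \<in> subspace_sum n (\<lambda>j. img n (E j)) J" unfolding subspace_sum_def by blast
  qed
qed

qed
lemma sp_carrier: "M \<in> carrier_mat n n \<Longrightarrow> shifted_prod n M ths i \<in> carrier_mat n n"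
  by (induction i, auto)

theorem lemma7p5:
  fixes n d :: nat and q t :: "'a::alg_closed_field"
    and A As K B Bs :: "'a mat" and th ths :: "nat \<Rightarrow> 'a"
  assumes "n > 0"
    and "q \<noteq> 0" and "\<forall>m::nat. m > 0 \<longrightarrow> q ^ m \<noteq> 1"
    and "d \<ge> 1"
    and "\<forall>i. th i = q powi (2 * int i - int d)"
    and "\<forall>i. ths i = q powi (int d - 2 * int i)"
    and "tridiagonal_system n d A th As ths"
    and "q_serre n q A As"
    and "K \<in> carrier_mat n n"
    and "\<forall>i\<le>d. \<forall>u\<in>split_comp n d A th As ths i. K *\<^sub>v u = (q powi (int d - 2 * int i)) \<cdot>\<^sub>v u"
    and "B = A"
    and "Bs = t \<cdot>\<^sub>m As + (1 - t) \<cdot>\<^sub>m K"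
  shows "\<forall>i\<le>d. \<forall>u\<in>split_comp n d A th As ths i.
           shifted_prod n Bs ths i *\<^sub>v u = t ^ i \<cdot>\<^sub>v (shifted_prod n As ths i *\<^sub>v u) \<and>
           shifted_prod n Bs ths i *\<^sub>v u \<in> split_comp n d A th As ths 0"
proof -
  note tri = assms(7)[unfolded tridiagonal_system_def]
  have Ac: "A \<in> carrier_mat n n" and Asc: "As \<in> carrier_mat n n" using tri by auto
  have Kc: "K \<in> carrier_mat n n" by fact
  have Bsc: "Bs \<in> carrier_mat n n" using assms(12) Asc Kc by simp
  have FA: "(\<forall>j\<le>d. prim_idem n A th d j \<in> carrier_mat n n) \<and>
    (\<forall>j\<le>d. \<forall>k\<le>d. prim_idem n A th d k * prim_idem n A th d j = (if k = j then prim_idem n A th d j else 0\<^sub>m n n)) \<and>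
    (\<forall>j\<le>d. A * prim_idem n A th d j = th j \<cdot>\<^sub>m prim_idem n A th d j) \<and>
    (\<forall>j\<le>d. prim_idem n A th d j * A = th j \<cdot>\<^sub>m prim_idem n A th d j) \<and>
    (\<forall>x\<in>carrier_vec n. finsum_vec TYPE('a) n (\<lambda>j. prim_idem n A th d j *\<^sub>v x) {0..d} = x)"
    by (rule idem_facts, insert tri, auto)
  have FS: "(\<forall>j\<le>d. prim_idem n As ths d j \<in> carrier_mat n n) \<and>
    (\<forall>j\<le>d. \<forall>k\<le>d. prim_idem n As ths d k * prim_idem n As ths d j = (if k = j then prim_idem n As ths d j else 0\<^sub>m n n)) \<and>
    (\<forall>j\<le>d. As * prim_idem n As ths d j = ths j \<cdot>\<^sub>m prim_idem n As ths d j) \<and>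
    (\<forall>j\<le>d. prim_idem n As ths d j * As = ths j \<cdot>\<^sub>m prim_idem n As ths d j) \<and>
    (\<forall>x\<in>carrier_vec n. finsum_vec TYPE('a) n (\<lambda>j. prim_idem n As ths d j *\<^sub>v x) {0..d} = x)"
    by (rule idem_facts, insert tri, auto)
  let ?E = "prim_idem n A th d"
  let ?Es = "prim_idem n As ths d"
  have Ec: "\<And>j. j \<le> d \<Longrightarrow> ?E j \<in> carrier_mat n n" using FA by auto
  have Esc: "\<And>j. j \<le> d \<Longrightarrow> ?Es j \<in> carrier_mat n n" using FS by auto
  have EsAs: "\<And>j. j \<le> d \<Longrightarrow> ?Es j * As = ths j \<cdot>\<^sub>m ?Es j" using FS by auto
  have resA: "\<And>x. x \<in> carrier_vec n \<Longrightarrow> finsum_vec TYPE('a) n (\<lambda>j. ?E j *\<^sub>v x) {0..d} = x" using FA by auto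
  have triA: "\<And>k l. k \<le> d \<Longrightarrow> l \<le> d \<Longrightarrow> l > k + 1 \<Longrightarrow> ?E k * As * ?E l = 0\<^sub>m n n"
    using tri by auto
  define inU where "inU i x \<longleftrightarrow> x \<in> carrier_vec n \<and> (\<forall>k. i < k \<and> k \<le> d \<longrightarrow> ?Es k *\<^sub>v x = 0\<^sub>v n)
     \<and> (\<forall>k<i. ?E k *\<^sub>v x = 0\<^sub>v n)" for i x
  have U: "split_comp n d A th As ths i = {x. inU i x}" if "i \<le> d" for i
  proof -
    have "split_comp n d A th As ths i = {x \<in> carrier_vec n. \<forall>k\<in>{0..d}-{0..i}. ?Es k *\<^sub>v x = 0\<^sub>v n}
       \<inter> {x \<in> carrier_vec n. \<forall>k\<in>{0..d}-{i..d}. ?E k *\<^sub>v x = 0\<^sub>v n}"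
    proof -
      have s1: "subspace_sum n (\<lambda>j. img n (?Es j)) {0..i} = {x \<in> carrier_vec n. \<forall>k\<in>{0..d}-{0..i}. ?Es k *\<^sub>v x = 0\<^sub>v n}"
        by (rule sub_char, insert FS that, blast, blast, blast, auto)
      have s2: "subspace_sum n (\<lambda>j. img n (?E j)) {i..d} = {x \<in> carrier_vec n. \<forall>k\<in>{0..d}-{i..d}. ?E k *\<^sub>v x = 0\<^sub>v n}"
        by (rule sub_char, insert FA that, blast, blast, blast, auto)
      show ?thesis unfolding split_comp_def s1 s2 ..
    qed
    thus ?thesis unfolding inU_def using that by auto
  qed
  have Ks: "K *\<^sub>v u = ths i \<cdot>\<^sub>v u" if "i \<le> d" "inU i u" for i u
    using assms(10,6) U[OF that(1)] that by auto
  have scal: "inU i (c \<cdot>\<^sub>v x)" if "inU i x" "i \<le> d" for i c x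
  proof -
    have xc: "x \<in> carrier_vec n" using that unfolding inU_def by auto
    have "?Es k *\<^sub>v (c \<cdot>\<^sub>v x) = 0\<^sub>v n" if "i < k" "k \<le> d" for k
      using mult_mat_vec[OF Esc[OF that(2)] xc, of c] \<open>inU i x\<close> that unfolding inU_def by auto
    moreover have "?E k *\<^sub>v (c \<cdot>\<^sub>v x) = 0\<^sub>v n" if "k < i" for k
      using mult_mat_vec[OF Ec xc, of k c] \<open>inU i x\<close> \<open>i \<le> d\<close> that unfolding inU_def by auto
    ultimately show ?thesis unfolding inU_def using xc by auto
  qed
  have step: "inU j ((As - ths (Suc j) \<cdot>\<^sub>m 1\<^sub>m n) *\<^sub>v u)" if j: "Suc j \<le> d" and u: "inU (Suc j) u" for j u
  proof -
    define c where "c = ths (Suc j)"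
    have uc: "u \<in> carrier_vec n" using u unfolding inU_def by auto
    have w: "(As - c \<cdot>\<^sub>m 1\<^sub>m n) *\<^sub>v u = As *\<^sub>v u - c \<cdot>\<^sub>v u"
      using Asc uc by (simp add: minus_mult_distrib_mat_vec[OF Asc _ uc] smult_mat_vec[OF one_carrier_mat uc])
    have "?Es k *\<^sub>v (As *\<^sub>v u - c \<cdot>\<^sub>v u) = 0\<^sub>v n" if k: "j < k" "k \<le> d" for k
    proof -
      have "?Es k *\<^sub>v (As *\<^sub>v u - c \<cdot>\<^sub>v u) = ?Es k *\<^sub>v (As *\<^sub>v u) - c \<cdot>\<^sub>v (?Es k *\<^sub>v u)"
        using Esc[OF k(2)] Asc uc by (simp add: mult_minus_distrib_mat_vec[OF Esc[OF k(2)]] mult_mat_vec)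
      also have "?Es k *\<^sub>v (As *\<^sub>v u) = ths k \<cdot>\<^sub>v (?Es k *\<^sub>v u)"
        using assoc_mult_mat_vec[OF Esc[OF k(2)] Asc uc, symmetric] EsAs[OF k(2)] smult_mat_vec[OF Esc[OF k(2)] uc] by simp
      finally have eq: "?Es k *\<^sub>v (As *\<^sub>v u - c \<cdot>\<^sub>v u) = ths k \<cdot>\<^sub>v (?Es k *\<^sub>v u) - c \<cdot>\<^sub>v (?Es k *\<^sub>v u)" .
      show ?thesis
      proof (cases "k = Suc j")
        case True
        hence "ths k = c" unfolding c_def by simp
        thus ?thesis unfolding eq using Esc[OF k(2)] uc by simp
      next
        case False
        hence "?Es k *\<^sub>v u = 0\<^sub>v n" using u k unfolding inU_def by auto
        thus ?thesis unfolding eq by simp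
      qed
    qed
    moreover have "?E k *\<^sub>v (As *\<^sub>v u - c \<cdot>\<^sub>v u) = 0\<^sub>v n" if k: "k < j" for k
    proof -
      have kd: "k \<le> d" using k j by auto
      have Eku: "?E k *\<^sub>v u = 0\<^sub>v n" using u k unfolding inU_def by auto
      have "?E k *\<^sub>v (As *\<^sub>v u - c \<cdot>\<^sub>v u) = ?E k *\<^sub>v (As *\<^sub>v u) - c \<cdot>\<^sub>v (?E k *\<^sub>v u)"
        using Ec[OF kd] Asc uc by (simp add: mult_minus_distrib_mat_vec[OF Ec[OF kd]] mult_mat_vec)
      also have "?E k *\<^sub>v (As *\<^sub>v u) = 0\<^sub>v n"
      proof -
        have lc: "\<And>l. l \<in> {0..d} \<Longrightarrow> ?E l *\<^sub>v u \<in> carrier_vec n"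
          by (rule mult_mat_vec_carrier[OF Ec uc], simp)
        have lc2: "\<And>l. l \<in> {0..d} \<Longrightarrow> As *\<^sub>v (?E l *\<^sub>v u) \<in> carrier_vec n"
          by (rule mult_mat_vec_carrier[OF Asc lc])
        have "As *\<^sub>v u = finsum_vec TYPE('a) n (\<lambda>l. As *\<^sub>v (?E l *\<^sub>v u)) {0..d}"
        proof -
          have "As *\<^sub>v finsum_vec TYPE('a) n (\<lambda>l. ?E l *\<^sub>v u) {0..d} = finsum_vec TYPE('a) n (\<lambda>l. As *\<^sub>v (?E l *\<^sub>v u)) {0..d}"
            by (rule finsum_mult_vec[OF Asc], simp, rule lc)
          thus ?thesis using resA[OF uc] by simp
        qed
        hence "?E k *\<^sub>v (As *\<^sub>v u) = finsum_vec TYPE('a) n (\<lambda>l. ?E k *\<^sub>v (As *\<^sub>v (?E l *\<^sub>v u))) {0..d}"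
        proof -
          have "?E k *\<^sub>v finsum_vec TYPE('a) n (\<lambda>l. As *\<^sub>v (?E l *\<^sub>v u)) {0..d} = finsum_vec TYPE('a) n (\<lambda>l. ?E k *\<^sub>v (As *\<^sub>v (?E l *\<^sub>v u))) {0..d}"
            by (rule finsum_mult_vec[OF Ec[OF kd]], simp, rule lc2)
          thus ?thesis using \<open>As *\<^sub>v u = _\<close> by simp
        qed
        also have "\<dots> = finsum_vec TYPE('a) n (\<lambda>_. 0\<^sub>v n) {0..d}"
        proof (rule finsum_vec_cong)
          fix l assume l: "l \<in> {0..d}"
          hence ld: "l \<le> d" by simp
          show "?E k *\<^sub>v (As *\<^sub>v (?E l *\<^sub>v u)) = 0\<^sub>v n"
          proof (cases "l \<le> j")
            case True
            hence "?E l *\<^sub>v u = 0\<^sub>v n" using u unfolding inU_def by auto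
            thus ?thesis using Asc Ec[OF kd] by simp
          next
            case False
            hence "l > k + 1" using k by auto
            hence "?E k * As * ?E l = 0\<^sub>m n n" using triA kd ld by auto
            moreover have "(?E k * As * ?E l) *\<^sub>v u = ?E k *\<^sub>v (As *\<^sub>v (?E l *\<^sub>v u))"
              using assoc_mult_mat_vec[OF mult_carrier_mat[OF Ec[OF kd] Asc] Ec[OF ld] uc]
                assoc_mult_mat_vec[OF Ec[OF kd] Asc lc[OF l]] by simp
            ultimately show ?thesis using uc by simp
          qed
        qed simp
        also have "\<dots> = 0\<^sub>v n" by (rule finsum_vec_zero, simp)
        finally show ?thesis .
      qed
      finally show ?thesis using Eku by simp
    qed
    ultimately show ?thesis unfolding c_def[symmetric] w inU_def using uc Asc by auto
  qed
  have main: "\<forall>u. inU i u \<longrightarrow> shifted_prod n Bs ths i *\<^sub>v u = t ^ i \<cdot>\<^sub>v (shifted_prod n As ths i *\<^sub>v u)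
     \<and> inU 0 (shifted_prod n Bs ths i *\<^sub>v u)" if "i \<le> d" for i
    using that
  proof (induction i)
    case 0
    show ?case
    proof (intro allI impI conjI)
      fix u assume u: "inU 0 u"
      hence uc: "u \<in> carrier_vec n" unfolding inU_def by auto
      show "shifted_prod n Bs ths 0 *\<^sub>v u = t ^ 0 \<cdot>\<^sub>v (shifted_prod n As ths 0 *\<^sub>v u)" using uc by simp
      show "inU 0 (shifted_prod n Bs ths 0 *\<^sub>v u)" using uc u by simp
    qed
  next
    case (Suc j)
    show ?case
    proof (intro allI impI conjI)
      fix u assume u: "inU (Suc j) u"
      hence uc: "u \<in> carrier_vec n" unfolding inU_def by auto
      define c where "c = ths (Suc j)"
      define w where "w = (As - c \<cdot>\<^sub>m 1\<^sub>m n) *\<^sub>v u"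
      have wU: "inU j w" unfolding w_def c_def by (rule step[OF Suc(2) u])
      have wc: "w \<in> carrier_vec n" using wU unfolding inU_def by auto
      have twU: "inU j (t \<cdot>\<^sub>v w)" by (rule scal[OF wU], insert Suc(2), simp)
      have Ku: "K *\<^sub>v u = c \<cdot>\<^sub>v u" unfolding c_def by (rule Ks[OF Suc(2) u])
      have Bw: "(Bs - c \<cdot>\<^sub>m 1\<^sub>m n) *\<^sub>v u = t \<cdot>\<^sub>v w"
      proof -
        have "(Bs - c \<cdot>\<^sub>m 1\<^sub>m n) *\<^sub>v u = Bs *\<^sub>v u - c \<cdot>\<^sub>v u"
          using Bsc uc by (simp add: minus_mult_distrib_mat_vec[OF Bsc _ uc] smult_mat_vec[OF one_carrier_mat uc])
        also have "Bs *\<^sub>v u = t \<cdot>\<^sub>v (As *\<^sub>v u) + (1 - t) \<cdot>\<^sub>v (c \<cdot>\<^sub>v u)"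
          unfolding assms(12) using Asc Kc uc Ku
          by (simp add: add_mult_distrib_mat_vec[of _ n n] smult_mat_vec)
        also have "w = As *\<^sub>v u - c \<cdot>\<^sub>v u" unfolding w_def
          using Asc uc by (simp add: minus_mult_distrib_mat_vec[OF Asc _ uc] smult_mat_vec[OF one_carrier_mat uc])
        ultimately show ?thesis using Asc uc
          by (intro eq_vecI, auto simp: algebra_simps)
      qed
      have SPB: "shifted_prod n Bs ths (Suc j) *\<^sub>v u = shifted_prod n Bs ths j *\<^sub>v (t \<cdot>\<^sub>v w)"
      proof -
        have Yc: "Bs - c \<cdot>\<^sub>m 1\<^sub>m n \<in> carrier_mat n n" by (rule minus_carrier_mat, simp)
        show ?thesis using assoc_mult_mat_vec[OF sp_carrier[OF Bsc] Yc uc] Bw unfolding c_def by simp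
      qed
      have SPA: "shifted_prod n As ths (Suc j) *\<^sub>v u = shifted_prod n As ths j *\<^sub>v w"
      proof -
        have Yc: "As - c \<cdot>\<^sub>m 1\<^sub>m n \<in> carrier_mat n n" by (rule minus_carrier_mat, simp)
        show ?thesis using assoc_mult_mat_vec[OF sp_carrier[OF Asc] Yc uc] unfolding c_def w_def by simp
      qed
      have IH: "shifted_prod n Bs ths j *\<^sub>v (t \<cdot>\<^sub>v w) = t ^ j \<cdot>\<^sub>v (shifted_prod n As ths j *\<^sub>v (t \<cdot>\<^sub>v w))"
        "inU 0 (shifted_prod n Bs ths j *\<^sub>v (t \<cdot>\<^sub>v w))"
        using Suc(1) Suc(2) twU by auto
      show "inU 0 (shifted_prod n Bs ths (Suc j) *\<^sub>v u)" using SPB IH by simp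
      have "shifted_prod n As ths j *\<^sub>v (t \<cdot>\<^sub>v w) = t \<cdot>\<^sub>v (shifted_prod n As ths j *\<^sub>v w)"
        by (rule mult_mat_vec[OF sp_carrier[OF Asc] wc])
      thus "shifted_prod n Bs ths (Suc j) *\<^sub>v u = t ^ Suc j \<cdot>\<^sub>v (shifted_prod n As ths (Suc j) *\<^sub>v u)"
        using SPB SPA IH(1) by (simp add: smult_smult_assoc mult.commute)
    qed
  qed
  show ?thesis
  proof (intro allI impI ballI)
    fix i u assume i: "i \<le> d" and u: "u \<in> split_comp n d A th As ths i"
    have "inU i u" using U[OF i] u by auto
    thus "shifted_prod n Bs ths i *\<^sub>v u = t ^ i \<cdot>\<^sub>v (shifted_prod n As ths i *\<^sub>v u) \<and>
           shifted_prod n Bs ths i *\<^sub>v u \<in> split_comp n d A th As ths 0"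
      using main[OF i] U[of 0] by auto
  qed
qed

end
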